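(* Let $d\ge1$, $r\in(0,+\infty)$, let $\|\cdot\|$ be a norm on $\mathbb{R}^d$. Assume $P=h\cdot\lambda_d$ with $h\in L^{\frac{d}{d+r}}(\lambda_d)$ and $\int\|x\|^r\,dP(x)<+\infty$. Let $(a_n)_{n\ge1}$ be an $L^r$-optimal greedy quantization sequence for $P$, $a^{(n)}=\{a_1,\dots,a_n\}$, so that $a_1$ is an $L^r$-median of $P$. Assume $\operatorname{supp}(P)\subset A$ and $a_1\in A$ for some set $A$ which is star-shaped with respect to $a_1$ and peakless with respect to $a_1$ in the sense that $$\mathfrak{p}(A,\|\cdot-a_1\|):=\inf\Big\{\frac{\lambda_d(B(x,t)\cap A)}{\lambda_d(B(x,t))}:\ x\in A,\ 0<t\le\|x-a_1\|\Big\}>0.$$ Assume $h$ is almost radial non-increasing on $A$ with respect to $a_1$, with associated norm $\|\cdot\|_0$ and constant $M\in(0,1]$, and let $C_0\in[1,+\infty)$ be such that $\frac1{C_0}\|x\|_0\le\|x\|\le C_0\|x\|_0$ for all $x\in\mathbb{R}^d$. Then $$\forall n\ge2,\quad e_r(a^{(n)},P)\le\kappa^{\mathrm{G,Z,P}}_{d,r,M,C_0,\mathfrak{p}(A,\|\cdot-a_1\|)}\ \|h\|^{\frac1r}_{L^{\frac{d}{d+r}}(\lambda_d)}(n-1)^{-\frac1d},$$ where $$\kappa^{\mathrm{G,Z,P}}_{d,r,M,C_0,\mathfrak{p}(A,\|\cdot-a_1\|)}\le\frac{2C_0^2\,r^{\frac1d}}{d^{\frac1d}M^{d+r}V_d^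{\frac1d}\mathfrak{p}(A,\|\cdot-a_1\|)^{\frac1d}}\min_{\varepsilon\in(0,\frac13)}\varphi_r(\varepsilon)^{-\frac1d}.$$
   Context: For a finite nonempty $\Gamma\subset\mathbb{R}^d$, $d(x,\Gamma)=\min_{a\in\Gamma}\|x-a\|$ and $e_r(\Gamma,P)=\big(\int d(x,\Gamma)^r dP(x)\big)^{1/r}$. An $L^r$-optimal greedy quantization sequence for $P$ is a sequence $(a_n)_{n\ge1}$ with $a_{n+1}\in\operatorname{argmin}_{\xi}e_r(a^{(n)}\cup\{\xi\},P)$ for all $n\ge0$, $a^{(0)}=\varnothing$, $a^{(n)}=\{a_1,\dots,a_n\}$. $B(x,t)=\{y:\|y-x\|\le t\}$, $\lambda_d$ Lebesgue measure, $V_d=\lambda_d(B(0,1))$, $\varphi_r(u)=(3^{-r}-u^r)u^d$, $\|h\|_{L^{p}(\lambda_d)}=(\int h^p d\lambda_d)^{1/p}$. A function $f:\mathbb{R}^d\to\mathbb{R}_+$ is almost radial non-increasing on $A$ with respect to $a\in A$ if there exist a norm $\|\cdot\|_0$ on $\mathbb{R}^d$ and a constant $M\in(0,1]$ such that for all $x,y\in A\setminus\{a\}$ with $\|y-a\|_0\le\|x-a\|_0$, one has $f(y)\ge Mf(x)$. *)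

theory Defs
  imports "HOL-Probability.Probability"
begin

definition is_norm :: "('a::real_vector \<Rightarrow> real) \<Rightarrow> bool" where
  "is_norm N \<longleftrightarrow> (\<forall>x. 0 \<le> N x) \<and> (\<forall>x. N x = 0 \<longleftrightarrow> x = 0)
     \<and> (\<forall>c x. N (scaleR c x) = \<bar>c\<bar> * N x) \<and> (\<forall>x y. N (x + y) \<le> N x + N y)"

definition nball :: "('a::real_vector \<Rightarrow> real) \<Rightarrow> 'a \<Rightarrow> real \<Rightarrow> 'a set" where
  "nball N x t = {y. N (y - x) \<le> t}"

definition dist_set :: "('a::real_vector \<Rightarrow> real) \<Rightarrow> 'a \<Rightarrow> 'a set \<Rightarrow> real" where
  "dist_set N x \<Gamma> = Min ((\<lambda>a. N (x - a)) ` \<Gamma>)"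

definition quant_err :: "('a::real_vector \<Rightarrow> real) \<Rightarrow> real \<Rightarrow> 'a measure \<Rightarrow> 'a set \<Rightarrow> real" where
  "quant_err N r P \<Gamma> = (\<integral>x. dist_set N x \<Gamma> powr r \<partial>P) powr (1 / r)"

definition greedy_seq :: "('a::real_vector \<Rightarrow> real) \<Rightarrow> real \<Rightarrow> 'a measure \<Rightarrow> (nat \<Rightarrow> 'a) \<Rightarrow> bool" where
  "greedy_seq N r P a \<longleftrightarrow>
     (\<forall>n \<xi>. quant_err N r P (a ` {1..n} \<union> {a (Suc n)}) \<le> quant_err N r P (a ` {1..n} \<union> {\<xi>}))"

definition msupp :: "'a::metric_space measure \<Rightarrow> 'a set" where
  "msupp M = {x. \<forall>e>0. emeasure M (ball x e) > 0}"

definition peakless_const :: "('a::euclidean_space \<Rightarrow> real) \<Rightarrow> 'a set \<Rightarrow> 'a \<Rightarrow> real" where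
  "peakless_const N A a = Inf {measure lebesgue (nball N x t \<inter> A) / measure lebesgue (nball N x t)
                               | x t. x \<in> A \<and> 0 < t \<and> t \<le> N (x - a)}"

definition almost_radial_noninc_with ::
  "('a::real_vector \<Rightarrow> real) \<Rightarrow> real \<Rightarrow> ('a \<Rightarrow> real) \<Rightarrow> 'a set \<Rightarrow> 'a \<Rightarrow> bool" where
  "almost_radial_noninc_with N0 M f A a \<longleftrightarrow> is_norm N0 \<and> 0 < M \<and> M \<le> 1 \<and>
     (\<forall>x\<in>A - {a}. \<forall>y\<in>A - {a}. N0 (y - a) \<le> N0 (x - a) \<longrightarrow> f y \<ge> M * f x)"

definition phi_r :: "real \<Rightarrow> nat \<Rightarrow> real \<Rightarrow> real" where
  "phi_r r d u = (3 powr (- r) - u powr r) * u ^ d"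

end

theory Submission
  imports Defs
begin


lemma isn_nonneg: "is_norm N \<Longrightarrow> 0 \<le> N x" by (simp add: is_norm_def)
lemma isn_zero[simp]: "is_norm N \<Longrightarrow> N 0 = 0" by (simp add: is_norm_def)
lemma isn_eq0: "is_norm N \<Longrightarrow> N x = 0 \<longleftrightarrow> x = 0" by (simp add: is_norm_def)
lemma isn_scale: "is_norm N \<Longrightarrow> N (c *\<^sub>R x) = \<bar>c\<bar> * N x" by (simp add: is_norm_def)
lemma isn_tri: "is_norm N \<Longrightarrow> N (x + y) \<le> N x + N y" by (simp add: is_norm_def)
lemma isn_minus: "is_norm N \<Longrightarrow> N (- x) = N x"
  using isn_scale[of N "-1" x] by simp
lemma isn_commute: "is_norm N \<Longrightarrow> N (x - y) = N (y - x)"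
  using isn_minus[of N "x - y"] by simp
lemma isn_tri_diff: "is_norm N \<Longrightarrow> N (x - z) \<le> N (x - y) + N (y - z)"
  using isn_tri[of N "x - y" "y - z"] by simp
lemma isn_rev: "is_norm N \<Longrightarrow> N x - N y \<le> N (x - y)"
  using isn_tri[of N "x - y" y] by simp
lemma isn_sum: "is_norm N \<Longrightarrow> N (sum f S) \<le> (\<Sum>i\<in>S. N (f i))"
proof (induction S rule: infinite_finite_induct)
  case (insert x F)
  then show ?case using isn_tri[of N "f x" "sum f F"] by simp
qed auto

lemma isn_upper:
  fixes N :: "'a::euclidean_space \<Rightarrow> real"
  assumes "is_norm N" shows "\<exists>K>0. \<forall>x. N x \<le> K * norm x"
proof -
  define K where "K = 1 + (\<Sum>b\<in>Basis. N b)"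
  have K0: "K > 0" unfolding K_def using isn_nonneg[OF assms] by (simp add: add_pos_nonneg sum_nonneg)
  have "N x \<le> K * norm x" for x
  proof -
    have "N x = N (\<Sum>b\<in>Basis. (x \<bullet> b) *\<^sub>R b)" by (simp add: euclidean_representation)
    also have "\<dots> \<le> (\<Sum>b\<in>Basis. N ((x \<bullet> b) *\<^sub>R b))" by (rule isn_sum[OF assms])
    also have "\<dots> = (\<Sum>b\<in>Basis. \<bar>x \<bullet> b\<bar> * N b)" using isn_scale[OF assms] by simp
    also have "\<dots> \<le> (\<Sum>b\<in>Basis. norm x * N b)"
      by (intro sum_mono mult_right_mono) (auto simp: Basis_le_norm isn_nonneg[OF assms])
    also have "\<dots> \<le> K * norm x" unfolding K_def by (simp add: sum_distrib_right[symmetric] algebra_simps)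
    finally show ?thesis .
  qed
  with K0 show ?thesis by blast
qed

lemma isn_cont:
  fixes N :: "'a::euclidean_space \<Rightarrow> real"
  assumes "is_norm N" shows "continuous_on UNIV N"
proof -
  obtain K where K: "K > 0" "\<forall>x. N x \<le> K * norm x" using isn_upper[OF assms] by blast
  have "K-lipschitz_on UNIV N"
  proof (rule lipschitz_onI)
    fix x y :: 'a
    have "\<bar>N x - N y\<bar> \<le> N (x - y)"
      using isn_rev[OF assms, of x y] isn_rev[OF assms, of y x] isn_commute[OF assms, of x y] by linarith
    also have "\<dots> \<le> K * dist x y" using K by (simp add: dist_norm)
    finally show "dist (N x) (N y) \<le> K * dist x y" by (simp add: dist_real_def)
  qed (use K in auto)
  then show ?thesis by (rule lipschitz_on_continuous_on)
qed

lemma isn_lower: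
  fixes N :: "'a::euclidean_space \<Rightarrow> real"
  assumes "is_norm N" shows "\<exists>k>0. \<forall>x. k * norm x \<le> N x"
proof -
  have cs: "compact (sphere (0::'a) 1)" by simp
  have ne: "sphere (0::'a) 1 \<noteq> {}" by simp
  obtain u where u: "u \<in> sphere 0 1" "\<forall>y\<in>sphere 0 1. N u \<le> N y"
    using continuous_attains_inf[OF cs ne continuous_on_subset[OF isn_cont[OF assms]]] by blast
  have "u \<noteq> 0" using u by auto
  then have k: "N u > 0" using isn_nonneg[OF assms, of u] isn_eq0[OF assms, of u] by linarith
  have "N u * norm x \<le> N x" for x
  proof (cases "x = 0")
    case False
    have "(1 / norm x) *\<^sub>R x \<in> sphere 0 1" using False by simp
    then have "N u \<le> N ((1 / norm x) *\<^sub>R x)" using u by blast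
    also have "\<dots> = N x / norm x" using isn_scale[OF assms] by simp
    finally show ?thesis using False by (simp add: field_simps)
  qed (simp add: assms)
  with k show ?thesis by blast
qed


lemma isn_cont_shift:
  fixes N :: "'a::euclidean_space \<Rightarrow> real"
  assumes "is_norm N" shows "continuous_on UNIV (\<lambda>y. N (y - x))"
  by (rule continuous_on_compose2[OF isn_cont[OF assms]]) (auto intro!: continuous_intros)

lemma nball_closed:
  fixes N :: "'a::euclidean_space \<Rightarrow> real"
  assumes "is_norm N" shows "closed (nball N x t)"
  unfolding nball_def by (rule closed_Collect_le[OF isn_cont_shift[OF assms]]) (auto intro: continuous_intros)

lemma nball_borel:
  fixes N :: "'a::euclidean_space \<Rightarrow> real"
  assumes "is_norm N" shows "nball N x t \<in> sets lborel"
  using nball_closed[OF assms] by simp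

lemma nball_bounded:
  fixes N :: "'a::euclidean_space \<Rightarrow> real"
  assumes "is_norm N" shows "bounded (nball N x t)"
proof -
  obtain k where k: "k > 0" "\<forall>x. k * norm x \<le> N x" using isn_lower[OF assms] by blast
  have "nball N x t \<subseteq> cball x (t / k)"
  proof
    fix y assume "y \<in> nball N x t"
    then have "N (y - x) \<le> t" by (simp add: nball_def)
    then have "k * norm (y - x) \<le> t" using k by (meson order_trans)
    then show "y \<in> cball x (t / k)" using k by (simp add: dist_norm norm_minus_commute field_simps)
  qed
  then show ?thesis using bounded_cball bounded_subset by blast
qed

lemma nball_contains:
  fixes N :: "'a::euclidean_space \<Rightarrow> real"
  assumes "is_norm N" shows "\<exists>K>0. \<forall>x t. cball x (t / K) \<subseteq> nball N x t"
proof -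
  obtain K where K: "K > 0" "\<forall>x. N x \<le> K * norm x" using isn_upper[OF assms] by blast
  have "cball x (t / K) \<subseteq> nball N x t" for x t
  proof
    fix y assume "y \<in> cball x (t / K)"
    then have "K * norm (y - x) \<le> t" using K by (simp add: dist_norm norm_minus_commute field_simps)
    then show "y \<in> nball N x t" using K by (auto simp: nball_def intro: order_trans)
  qed
  with K show ?thesis by blast
qed

lemma nball_affine:
  fixes N :: "'a::euclidean_space \<Rightarrow> real"
  assumes "is_norm N" "t > 0" shows "nball N y t = (\<lambda>z. t *\<^sub>R z + y) ` nball N 0 1"
proof (intro set_eqI iffI)
  fix z assume z: "z \<in> nball N y t"
  have "N ((1/t) *\<^sub>R (z - y)) = N (z - y) / t" using isn_scale[OF assms(1)] assms(2) by simp
  also have "\<dots> \<le> 1" using z assms(2) by (simp add: nball_def)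
  finally have "(1/t) *\<^sub>R (z - y) \<in> nball N 0 1" by (simp add: nball_def)
  moreover have "z = t *\<^sub>R ((1/t) *\<^sub>R (z - y)) + y" using assms(2) by simp
  ultimately show "z \<in> (\<lambda>z. t *\<^sub>R z + y) ` nball N 0 1" by blast
next
  fix z assume "z \<in> (\<lambda>z. t *\<^sub>R z + y) ` nball N 0 1"
  then obtain w where w: "N w \<le> 1" "z = t *\<^sub>R w + y" by (auto simp: nball_def)
  have "N (z - y) = t * N w" using w isn_scale[OF assms(1)] assms(2) by simp
  also have "\<dots> \<le> t" using w assms(2) by (simp add: mult_le_cancel_left1)
  finally show "z \<in> nball N y t" by (simp add: nball_def)
qed

lemma nball_measure:
  fixes N :: "'a::euclidean_space \<Rightarrow> real"
  assumes "is_norm N" "t > 0"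
  shows "measure lebesgue (nball N y t) = t ^ DIM('a) * measure lborel (nball N 0 1)"
proof -
  have "measure lebesgue (nball N y t) = \<bar>t\<bar> ^ DIM('a) * measure lebesgue (nball N 0 1)"
    unfolding nball_affine[OF assms, of y] by (rule measure_lebesgue_affine)
  then show ?thesis using assms(2) nball_borel[OF assms(1)] by simp
qed

lemma nball_fmeas:
  fixes N :: "'a::euclidean_space \<Rightarrow> real"
  assumes "is_norm N" shows "nball N x t \<in> fmeasurable lborel"
proof -
  obtain c e where ce: "nball N x t \<subseteq> cball c e" using nball_bounded[OF assms] bounded_subset_cball by blast
  have "emeasure lborel (nball N x t) \<le> emeasure lborel (cball c e)"
    by (rule emeasure_mono[OF ce]) simp
  also have "\<dots> < \<infinity>" by (rule emeasure_lborel_cball_finite)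
  finally show ?thesis using nball_borel[OF assms] by (simp add: fmeasurable_def)
qed

lemma nball_vol_pos:
  fixes N :: "'a::euclidean_space \<Rightarrow> real"
  assumes "is_norm N" shows "0 < measure lborel (nball N (0::'a) 1)"
proof -
  obtain K where K: "K > 0" "\<forall>x t. cball x (t / K) \<subseteq> nball N x t" using nball_contains[OF assms] by blast
  have "0 < measure lborel (ball (0::'a) (1 / K))" using K by (simp only: content_ball_gt_0_iff) simp
  also have "\<dots> \<le> measure lborel (nball N (0::'a) 1)"
  proof (rule measure_mono_fmeasurable)
    show "ball (0::'a) (1/K) \<subseteq> nball N 0 1" using K ball_subset_cball by blast
    show "nball N (0::'a) 1 \<in> fmeasurable lborel"
      by (rule nball_fmeas[OF assms])
  qed auto
  finally show ?thesis .
qed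


lemma ds_le: "finite G \<Longrightarrow> g \<in> G \<Longrightarrow> dist_set N x G \<le> N (x - g)"
  unfolding dist_set_def by (rule Min_le) auto

lemma ds_attained: "finite G \<Longrightarrow> G \<noteq> {} \<Longrightarrow> \<exists>g\<in>G. dist_set N x G = N (x - g)"
proof -
  assume "finite G" "G \<noteq> {}"
  then have "Min ((\<lambda>a. N (x - a)) ` G) \<in> (\<lambda>a. N (x - a)) ` G" by (intro Min_in) auto
  then show ?thesis unfolding dist_set_def by auto
qed

lemma ds_nonneg: "is_norm N \<Longrightarrow> finite G \<Longrightarrow> G \<noteq> {} \<Longrightarrow> 0 \<le> dist_set N x G"
  using ds_attained[of G N x] isn_nonneg[of N] by metis

lemma ds_lip: "is_norm N \<Longrightarrow> finite G \<Longrightarrow> G \<noteq> {} \<Longrightarrow> dist_set N x G \<le> dist_set N z G + N (x - z)"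
proof -
  assume nN: "is_norm N" and fG: "finite G" and ne: "G \<noteq> {}"
  obtain g where g: "g \<in> G" "dist_set N z G = N (z - g)" using ds_attained[OF fG ne] by blast
  have "dist_set N x G \<le> N (x - g)" by (rule ds_le[OF fG g(1)])
  also have "\<dots> \<le> N (x - z) + N (z - g)" by (rule isn_tri_diff[OF nN])
  finally show ?thesis using g by simp
qed

lemma ds_mono: "finite G' \<Longrightarrow> G \<subseteq> G' \<Longrightarrow> finite G \<Longrightarrow> G \<noteq> {} \<Longrightarrow> dist_set N x G' \<le> dist_set N x G"
  using ds_attained[of G N x] ds_le[of G' _ N x] by (metis in_mono)

lemma ds_insert_le: "finite G \<Longrightarrow> dist_set N x (insert y G) \<le> N (x - y)"
  by (rule ds_le) auto

lemma ds_cont: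
  fixes N :: "'a::euclidean_space \<Rightarrow> real"
  assumes nN: "is_norm N" and fG: "finite G" and ne: "G \<noteq> {}"
  shows "continuous_on UNIV (\<lambda>x. dist_set N x G)"
proof -
  obtain K where K: "K > 0" "\<forall>x. N x \<le> K * norm x" using isn_upper[OF nN] by blast
  have "K-lipschitz_on UNIV (\<lambda>x. dist_set N x G)"
  proof (rule lipschitz_onI)
    fix x y :: 'a
    have "\<bar>dist_set N x G - dist_set N y G\<bar> \<le> N (x - y)"
      using ds_lip[OF nN fG ne, of x y] ds_lip[OF nN fG ne, of y x] isn_commute[OF nN, of x y] by linarith
    also have "\<dots> \<le> K * dist x y" using K by (simp add: dist_norm)
    finally show "dist (dist_set N x G) (dist_set N y G) \<le> K * dist x y" by (simp add: dist_real_def)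
  qed (use K in auto)
  then show ?thesis by (rule lipschitz_on_continuous_on)
qed

lemma ds_borel:
  fixes N :: "'a::euclidean_space \<Rightarrow> real"
  assumes nN: "is_norm N" and fG: "finite G" and ne: "G \<noteq> {}"
  shows "(\<lambda>x. dist_set N x G) \<in> borel_measurable borel"
  using ds_cont[OF assms] by (rule borel_measurable_continuous_onI)



lemma bern_neg:
  fixes y \<alpha> :: real assumes "0 \<le> y" "y < 1" "\<alpha> > 0"
  shows "1 + \<alpha> * y \<le> (1 - y) powr (- \<alpha>)"
proof -
  have "ln (1 - y) \<le> - y" using ln_le_minus_one[of "1 - y"] assms by simp
  then have "\<alpha> * y \<le> \<alpha> * (- ln (1 - y))" using assms by (intro mult_left_mono) auto
  then have "exp (\<alpha> * y) \<le> exp (- \<alpha> * ln (1 - y))" by simp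
  moreover have "1 + \<alpha> * y \<le> exp (\<alpha> * y)" by (rule exp_ge_add_one_self)
  moreover have "(1 - y) powr (- \<alpha>) = exp (- \<alpha> * ln (1 - y))" using assms by (simp add: powr_def)
  ultimately show ?thesis by linarith
qed

lemma rec_step:
  fixes v w c \<alpha> :: real
  assumes "0 < v" "0 < w" "c > 0" "\<alpha> > 0" "v \<le> w - c * w powr (1 + \<alpha>)"
  shows "w powr (- \<alpha>) + \<alpha> * c \<le> v powr (- \<alpha>)"
proof -
  define y where "y = c * w powr \<alpha>"
  have y0: "0 \<le> y" using assms by (simp add: y_def)
  have wp: "w powr (1 + \<alpha>) = w * w powr \<alpha>" using assms by (simp add: powr_add)
  have v_le: "v \<le> w * (1 - y)" using assms(5) by (simp add: wp y_def algebra_simps)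
  have y1: "y < 1"
  proof (rule ccontr)
    assume "\<not> y < 1" then have "w * (1 - y) \<le> 0" using assms(2) by (simp add: mult_nonpos_nonneg mult_le_0_iff)
    then show False using v_le assms(1) by linarith
  qed
  have "(w * (1 - y)) powr (- \<alpha>) \<le> v powr (- \<alpha>)"
    by (rule powr_mono2') (use assms v_le in auto)
  moreover have "(w * (1 - y)) powr (- \<alpha>) = w powr (- \<alpha>) * (1 - y) powr (- \<alpha>)"
    using assms y1 by (simp add: powr_mult)
  moreover have "w powr (- \<alpha>) * (1 + \<alpha> * y) \<le> w powr (- \<alpha>) * (1 - y) powr (- \<alpha>)"
    by (rule mult_left_mono[OF bern_neg[OF y0 y1 assms(4)]]) simp
  moreover have "w powr (- \<alpha>) * (1 + \<alpha> * y) = w powr (- \<alpha>) + \<alpha> * c"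
  proof -
    have "w powr (- \<alpha>) * w powr \<alpha> = 1" using assms by (simp add: powr_add[symmetric])
    then show ?thesis unfolding y_def by (simp add: algebra_simps)
  qed
  ultimately show ?thesis by linarith
qed

lemma rec_bound:
  fixes u :: "nat \<Rightarrow> real" and c \<alpha> :: real
  assumes c: "c > 0" and al: "\<alpha> > 0" and nonneg: "\<forall>n\<ge>1. 0 \<le> u n"
    and step: "\<forall>n\<ge>1. u (Suc n) \<le> u n - c * u n powr (1 + \<alpha>)"
    and n: "n \<ge> 2"
  shows "u n \<le> (\<alpha> * c * (real n - 1)) powr (- 1 / \<alpha>)"
proof -
  have claim: "0 < u (Suc m) \<longrightarrow> \<alpha> * c * real m \<le> u (Suc m) powr (- \<alpha>)" for m
  proof (induction m)
    case 0 then show ?case by simp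
  next
    case (Suc m)
    show ?case
    proof
      assume pos: "0 < u (Suc (Suc m))"
      have st: "u (Suc (Suc m)) \<le> u (Suc m) - c * u (Suc m) powr (1 + \<alpha>)" using step by simp
      have "0 \<le> c * u (Suc m) powr (1 + \<alpha>)" using c by simp
      then have posm: "0 < u (Suc m)" using st pos by linarith
      have "u (Suc m) powr (- \<alpha>) + \<alpha> * c \<le> u (Suc (Suc m)) powr (- \<alpha>)"
        by (rule rec_step[OF pos posm c al st])
      then show "\<alpha> * c * real (Suc m) \<le> u (Suc (Suc m)) powr (- \<alpha>)"
        using Suc posm by (simp add: algebra_simps)
    qed
  qed
  obtain m where m: "n = Suc m" "m \<ge> 1" using n by (cases n) auto
  have nn: "0 \<le> u n" using nonneg n by simp
  show ?thesis
  proof (cases "u n = 0")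
    case True then show ?thesis by simp
  next
    case False
    then have pos: "0 < u n" using nn by simp
    have mpos: "0 < \<alpha> * c * real m" using m c al by simp
    have "\<alpha> * c * real m \<le> u n powr (- \<alpha>)" using claim[of m] pos m by simp
    then have "(u n powr (- \<alpha>)) powr (- 1 / \<alpha>) \<le> (\<alpha> * c * real m) powr (- 1 / \<alpha>)"
      by (intro powr_mono2'[OF _ mpos]) (use al in auto)
    moreover have "(u n powr (- \<alpha>)) powr (- 1 / \<alpha>) = u n"
      using pos al by (simp add: powr_powr)
    ultimately show ?thesis using m by simp
  qed
qed



lemma powr_add_le2:
  fixes x y r :: real assumes "0 \<le> x" "0 \<le> y" "0 < r"
  shows "(x + y) powr r \<le> 2 powr r * (x powr r + y powr r)"
proof -
  have "(x + y) powr r \<le> (2 * max x y) powr r" using assms by (intro powr_mono2) auto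
  also have "\<dots> = 2 powr r * max x y powr r" using assms by (simp add: powr_mult)
  also have "\<dots> \<le> 2 powr r * (x powr r + y powr r)"
    using assms by (intro mult_left_mono) (auto simp: max_def)
  finally show ?thesis .
qed

locale gq =
  fixes N N0 :: "'a::euclidean_space \<Rightarrow> real" and h :: "'a \<Rightarrow> real" and a :: "nat \<Rightarrow> 'a"
    and A :: "'a set" and r M C0 :: real and P :: "'a measure"
  assumes P_def: "P = density lborel (\<lambda>x. ennreal (h x))"
    and r: "0 < r" and nN: "is_norm N"
    and h_meas: "h \<in> borel_measurable lborel" and h_nonneg: "\<forall>x. 0 \<le> h x"
    and P_prob: "prob_space P"
    and h_Lp: "integrable lborel (\<lambda>x. h x powr (real DIM('a) / (real DIM('a) + r)))"
    and moment: "integrable P (\<lambda>x. N x powr r)"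
    and greedy: "greedy_seq N r P a"
    and A_meas: "A \<in> sets lebesgue"
    and supp: "msupp P \<subseteq> A"
    and a1A: "a 1 \<in> A"
    and star: "\<forall>x\<in>A. closed_segment (a 1) x \<subseteq> A"
    and peakless: "peakless_const N A (a 1) > 0"
    and radial: "almost_radial_noninc_with N0 M h A (a 1)"
    and C0: "1 \<le> C0"
    and equiv: "\<forall>x. N0 x / C0 \<le> N x \<and> N x \<le> C0 * N0 x"
begin

lemma sets_P[measurable_cong]: "sets P = sets borel" unfolding P_def by simp
lemma space_P[simp]: "space P = UNIV" unfolding P_def by simp

lemma ds_measP: "finite G \<Longrightarrow> G \<noteq> {} \<Longrightarrow> (\<lambda>x. dist_set N x G powr r) \<in> borel_measurable P"
proof -
  assume "finite G" "G \<noteq> {}"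
  then have "(\<lambda>x. dist_set N x G) \<in> borel_measurable borel" by (rule ds_borel[OF nN])
  then have "(\<lambda>x. dist_set N x G) \<in> borel_measurable P" using sets_P measurable_cong_sets by blast
  then show ?thesis by measurable
qed

lemma N_measP: "(\<lambda>x. N x) \<in> borel_measurable P"
proof -
  have "(\<lambda>x. N x) \<in> borel_measurable borel" using isn_cont[OF nN] by (rule borel_measurable_continuous_onI)
  then show ?thesis using sets_P measurable_cong_sets by blast
qed

lemma int_ds: assumes fG: "finite G" and ne: "G \<noteq> {}"
  shows "integrable P (\<lambda>x. dist_set N x G powr r)"
proof -
  interpret prob_space P by (rule P_prob)
  obtain g where g: "g \<in> G" using ne by blast
  have "integrable P (\<lambda>x. 2 powr r * (N x powr r + N g powr r))"
    using moment by (intro integrable_mult_right integrable_add) auto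
  then show ?thesis
  proof (rule Bochner_Integration.integrable_bound)
    show "(\<lambda>x. dist_set N x G powr r) \<in> borel_measurable P" by (rule ds_measP[OF fG ne])
    show "AE x in P. norm (dist_set N x G powr r) \<le> norm (2 powr r * (N x powr r + N g powr r))"
    proof (intro AE_I2)
      fix x
      have d0: "0 \<le> dist_set N x G" by (rule ds_nonneg[OF nN fG ne])
      have "dist_set N x G \<le> N (x - g)" by (rule ds_le[OF fG g])
      also have "\<dots> \<le> N x + N g" using isn_tri[OF nN, of x "- g"] isn_minus[OF nN, of g] by simp
      finally have "dist_set N x G powr r \<le> (N x + N g) powr r" using d0 r by (intro powr_mono2) auto
      also have "\<dots> \<le> 2 powr r * (N x powr r + N g powr r)"
        by (rule powr_add_le2) (use isn_nonneg[OF nN] r in auto)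
      finally show "norm (dist_set N x G powr r) \<le> norm (2 powr r * (N x powr r + N g powr r))"
        by simp
    qed
  qed
qed

definition E :: "'a set \<Rightarrow> real" where "E G = (\<integral>x. dist_set N x G powr r \<partial>P)"

lemma E_nonneg: "0 \<le> E G" unfolding E_def by (rule integral_nonneg_AE) simp

lemma qe_E: "quant_err N r P G = E G powr (1 / r)" unfolding quant_err_def E_def by simp

lemma E_insert_le: assumes "finite G" "G \<noteq> {}" shows "E (insert y G) \<le> E G"
  unfolding E_def
proof (rule integral_mono)
  show "integrable P (\<lambda>x. dist_set N x (insert y G) powr r)" using assms by (intro int_ds) auto
  show "integrable P (\<lambda>x. dist_set N x G powr r)" using assms by (intro int_ds) auto
  fix x
  show "dist_set N x (insert y G) powr r \<le> dist_set N x G powr r"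
    using assms ds_mono[of "insert y G" G N x] ds_nonneg[OF nN, of "insert y G" x]
    by (intro powr_mono2) (use r in auto)
qed

lemma greedy_E: assumes "n \<ge> 1" shows "E (a ` {1..Suc n}) \<le> E (insert y (a ` {1..n}))"
proof -
  have "quant_err N r P (a ` {1..n} \<union> {a (Suc n)}) \<le> quant_err N r P (a ` {1..n} \<union> {y})"
    using greedy unfolding greedy_seq_def by blast
  moreover have "a ` {1..n} \<union> {a (Suc n)} = a ` {1..Suc n}" by (auto simp: atLeastAtMostSuc_conv)
  moreover have "a ` {1..n} \<union> {y} = insert y (a ` {1..n})" by auto
  ultimately have le: "E (a ` {1..Suc n}) powr (1 / r) \<le> E (insert y (a ` {1..n})) powr (1 / r)"
    by (simp add: qe_E)
  have "(E (a ` {1..Suc n}) powr (1 / r)) powr r \<le> (E (insert y (a ` {1..n})) powr (1 / r)) powr r"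
    by (rule powr_mono2[OF _ _ le]) (use r in auto)
  moreover have "(E X powr (1 / r)) powr r = E X" for X
    using r E_nonneg[of X] by (simp add: powr_powr)
  ultimately show ?thesis by simp
qed

abbreviation "V \<equiv> measure lborel (nball N 0 1)"
abbreviation "pk \<equiv> peakless_const N A (a 1)"

lemma P_ball_lower:
  assumes yA: "y \<in> A" and t0: "0 < t" and ty: "t \<le> N (y - a 1)"
    and hz: "\<forall>z\<in>nball N y t \<inter> A - {a 1}. M * h x \<le> h z" and Mh: "0 \<le> M * h x"
  shows "M * h x * pk * (t ^ DIM('a) * V) \<le> measure P (nball N y t)"
proof -
  interpret prob_space P by (rule P_prob)
  define B where "B = nball N y t"
  have Bb: "B \<in> sets lborel" unfolding B_def by (rule nball_borel[OF nN])
  have BL: "B \<in> sets lebesgue" using Bb by simp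
  have mB: "measure lebesgue B = t ^ DIM('a) * V" unfolding B_def by (rule nball_measure[OF nN t0])
  have mBpos: "0 < measure lebesgue B" using mB t0 nball_vol_pos[OF nN] by simp
  have pk_le: "pk \<le> measure lebesgue (B \<inter> A) / measure lebesgue B"
    unfolding peakless_const_def
  proof (rule cInf_lower)
    show "measure lebesgue (B \<inter> A) / measure lebesgue B \<in>
      {measure lebesgue (nball N x t \<inter> A) / measure lebesgue (nball N x t) |x t. x \<in> A \<and> 0 < t \<and> t \<le> N (x - a 1)}"
      unfolding B_def using yA t0 ty by blast
    show "bdd_below {measure lebesgue (nball N x t \<inter> A) / measure lebesgue (nball N x t) |x t. x \<in> A \<and> 0 < t \<and> t \<le> N (x - a 1)}"
      by (rule bdd_belowI[of _ 0]) auto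
  qed
  then have pk_le': "pk * (t ^ DIM('a) * V) \<le> measure lebesgue (B \<inter> A)"
    using mBpos mB by (simp add: field_simps)
  have BA: "B \<inter> A \<in> sets lebesgue" using BL A_meas by simp
  have BAfin: "emeasure lebesgue (B \<inter> A) \<noteq> top"
  proof -
    have "emeasure lebesgue (B \<inter> A) \<le> emeasure lebesgue B" using BL by (intro emeasure_mono) auto
    also have "\<dots> = emeasure lborel B" using Bb by simp
    also have "\<dots> < top" using nball_fmeas[OF nN] unfolding B_def by (simp add: fmeasurable_def)
    finally show ?thesis by simp
  qed
  have null1: "{a 1} \<in> null_sets lebesgue" using negligible_iff_null_sets negligible_sing by blast
  have "emeasure P B = (\<integral>\<^sup>+ z. ennreal (h z) * indicator B z \<partial>lborel)"
    unfolding P_def using h_meas Bb by (intro emeasure_density) auto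
  also have "\<dots> = (\<integral>\<^sup>+ z. ennreal (h z) * indicator B z \<partial>lebesgue)"
    by (simp add: nn_integral_completion)
  also have "\<dots> \<ge> (\<integral>\<^sup>+ z. ennreal (M * h x) * indicator (B \<inter> A - {a 1}) z \<partial>lebesgue)"
  proof (rule nn_integral_mono)
    fix z
    show "ennreal (M * h x) * indicator (B \<inter> A - {a 1}) z \<le> ennreal (h z) * indicator B z"
      using hz unfolding B_def by (auto simp: indicator_def intro!: ennreal_leI)
  qed
  also have "(\<integral>\<^sup>+ z. ennreal (M * h x) * indicator (B \<inter> A - {a 1}) z \<partial>lebesgue)
      = ennreal (M * h x) * emeasure lebesgue (B \<inter> A - {a 1})"
    using BA null1 by (intro nn_integral_cmult_indicator) auto
  also have "emeasure lebesgue (B \<inter> A - {a 1}) = emeasure lebesgue (B \<inter> A)"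
    by (rule emeasure_Diff_null_set[OF null1 BA])
  also have "\<dots> = ennreal (measure lebesgue (B \<inter> A))" by (rule emeasure_eq_ennreal_measure[OF BAfin])
  finally have "ennreal (M * h x * measure lebesgue (B \<inter> A)) \<le> ennreal (measure P B)"
    using Mh by (simp add: emeasure_eq_measure ennreal_mult)
  then have "M * h x * measure lebesgue (B \<inter> A) \<le> measure P B" by simp
  moreover have "M * h x * (pk * (t ^ DIM('a) * V)) \<le> M * h x * measure lebesgue (B \<inter> A)"
    using pk_le' Mh by (intro mult_left_mono) auto
  ultimately show ?thesis unfolding B_def by (simp add: mult.assoc)
qed

lemma E_diff_lower:
  assumes fG: "finite G" and ne: "G \<noteq> {}" and Gc: "0 \<le> Gc"
    and hz: "\<forall>z\<in>nball N y t. Gc + t powr r \<le> dist_set N z G powr r"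
  shows "Gc * measure P (nball N y t) \<le> E G - E (insert y G)"
proof -
  interpret prob_space P by (rule P_prob)
  define B where "B = nball N y t"
  have BP: "B \<in> sets P" unfolding B_def using nball_borel[OF nN] sets_P by simp
  have i1: "integrable P (\<lambda>x. dist_set N x G powr r)" by (rule int_ds[OF fG ne])
  have i2: "integrable P (\<lambda>x. dist_set N x (insert y G) powr r)" using fG by (intro int_ds) auto
  have "E G - E (insert y G) = (\<integral>z. dist_set N z G powr r - dist_set N z (insert y G) powr r \<partial>P)"
    unfolding E_def using i1 i2 by simp
  also have "\<dots> \<ge> (\<integral>z. Gc * indicator B z \<partial>P)"
  proof (rule integral_mono)
    show "integrable P (\<lambda>z. Gc * indicator B z)" using BP by (intro integrable_mult_right integrable_real_indicator) (auto simp: emeasure_eq_measure)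
    show "integrable P (\<lambda>z. dist_set N z G powr r - dist_set N z (insert y G) powr r)"
      using i1 i2 by simp
    fix z
    have mono: "dist_set N z (insert y G) powr r \<le> dist_set N z G powr r"
      using fG ne ds_mono[of "insert y G" G N z] ds_nonneg[OF nN, of "insert y G" z]
      by (intro powr_mono2) (use r in auto)
    show "Gc * indicator B z \<le> dist_set N z G powr r - dist_set N z (insert y G) powr r"
    proof (cases "z \<in> B")
      case True
      have "dist_set N z (insert y G) \<le> N (z - y)" by (rule ds_insert_le[OF fG])
      also have "\<dots> \<le> t" using True by (simp add: B_def nball_def)
      finally have "dist_set N z (insert y G) powr r \<le> t powr r"
        using ds_nonneg[OF nN, of "insert y G" z] fG r by (intro powr_mono2) auto
      moreover have "Gc + t powr r \<le> dist_set N z G powr r" using hz True by (simp add: B_def)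
      ultimately show ?thesis using True by simp
    next
      case False then show ?thesis using mono by simp
    qed
  qed
  also have "(\<integral>z. Gc * indicator B z \<partial>P) = Gc * measure P B" by simp
  finally show ?thesis unfolding B_def .
qed

end


context gq begin

lemma N0_norm: "is_norm N0" using radial by (simp add: almost_radial_noninc_with_def)
lemma M_pos: "0 < M" and M_le1: "M \<le> 1" using radial by (auto simp: almost_radial_noninc_with_def)

lemma gain:
  assumes n: "n \<ge> 1" and xA: "x \<in> A" and e0: "0 < \<epsilon>" and e1: "\<epsilon> < 1/3"
  shows "V * pk * phi_r r DIM('a) \<epsilon> * M / (2 * C0\<^sup>2) ^ DIM('a)
           * dist_set N x (a ` {1..n}) powr (real DIM('a) + r) * h x
         \<le> E (a ` {1..n}) - E (a ` {1..Suc n})"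
proof -
  define G where "G = a ` {1..n}"
  have fG: "finite G" and neG: "G \<noteq> {}" and a1G: "a 1 \<in> G" using n by (auto simp: G_def)
  define \<rho> where "\<rho> = dist_set N x G"
  have rho0: "0 \<le> \<rho>" unfolding \<rho>_def by (rule ds_nonneg[OF nN fG neG])
  have greedy': "E (a ` {1..Suc n}) \<le> E (insert y G)" for y unfolding G_def by (rule greedy_E[OF n])
  show ?thesis
  proof (cases "\<rho> = 0")
    case True
    have "insert (a 1) G = G" using a1G by auto
    then have "E (a ` {1..Suc n}) \<le> E G" using greedy'[of "a 1"] by simp
    then show ?thesis using True r by (simp add: G_def \<rho>_def)
  next
    case False
    then have rho: "0 < \<rho>" using rho0 by simp
    define L where "L = N (x - a 1)"
    have rhoL: "\<rho> \<le> L" unfolding \<rho>_def L_def by (rule ds_le[OF fG a1G])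
    define \<delta> where "\<delta> = \<epsilon> * \<rho> / 2"
    define t where "t = \<epsilon> * \<rho> / (2 * C0\<^sup>2)"
    define s where "s = 1 - \<delta> / L"
    define y where "y = a 1 + s *\<^sub>R (x - a 1)"
    have Lpos: "0 < L" using rho rhoL by simp
    have C0sq: "1 \<le> C0\<^sup>2" using C0 by (simp add: one_le_power)
    have d0: "0 < \<delta>" using e0 rho by (simp add: \<delta>_def)
    have "\<epsilon> * \<rho> \<le> \<rho>" using e0 e1 rho by (intro mult_left_le_one_le) auto
    then have dL: "\<delta> \<le> L" using e0 rho rhoL unfolding \<delta>_def by linarith
    have s0: "0 \<le> s" and s1: "s \<le> 1" using dL d0 Lpos by (auto simp: s_def field_simps)
    have t0: "0 < t" using e0 rho C0 by (simp add: t_def)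
    have tle: "t \<le> \<epsilon> * \<rho> / 2"
      unfolding t_def using e0 rho C0sq by (intro divide_left_mono) auto
    have yA: "y \<in> A"
    proof -
      have "y = (1 - s) *\<^sub>R a 1 + s *\<^sub>R x" by (simp add: y_def algebra_simps)
      then have "y \<in> closed_segment (a 1) x" using s0 s1 by (auto simp: closed_segment_def)
      then show ?thesis using star xA by blast
    qed
    have Ny: "N (y - a 1) = s * L" using isn_scale[OF nN] s0 by (simp add: y_def L_def)
    have xy: "x - y = (1 - s) *\<^sub>R (x - a 1)" by (simp add: y_def algebra_simps)
    have Nxy: "N (x - y) = \<delta>" using isn_scale[OF nN] s1 Lpos d0 by (simp add: xy L_def s_def)
    have N0y: "N0 (y - a 1) = s * N0 (x - a 1)" using isn_scale[OF N0_norm] s0 by (simp add: y_def)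
    have ty: "t \<le> N (y - a 1)"
    proof -
      have "s * L = L - \<delta>" using Lpos by (simp add: s_def field_simps)
      moreover have "\<epsilon> * \<rho> / 2 \<le> \<rho> - \<epsilon> * \<rho> / 2" using e1 rho by (simp add: field_simps)
      ultimately show ?thesis using Ny tle rhoL by (simp add: \<delta>_def)
    qed
    have xa: "x \<noteq> a 1" using Lpos by (auto simp: L_def isn_zero[OF nN])
    define Gc where "Gc = \<rho> powr r * (3 powr (- r) - \<epsilon> powr r)"
    have epr: "\<epsilon> powr r \<le> 3 powr (- r)"
    proof -
      have "\<epsilon> powr r \<le> (1/3) powr r" using e0 e1 r by (intro powr_mono2) auto
      also have "\<dots> = 3 powr (- r)" by (simp add: powr_minus_divide powr_divide)
      finally show ?thesis .
    qed
    have Gc0: "0 \<le> Gc" using epr by (simp add: Gc_def)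
    have hz1: "\<forall>z\<in>nball N y t. Gc + t powr r \<le> dist_set N z G powr r"
    proof
      fix z assume z: "z \<in> nball N y t"
      have Nyz: "N (y - z) \<le> t" using z isn_commute[OF nN, of z y] by (simp add: nball_def)
      have "N (x - z) \<le> N (x - y) + N (y - z)" by (rule isn_tri_diff[OF nN])
      also have "\<dots> \<le> \<epsilon> * \<rho>" using Nxy Nyz tle by (simp add: \<delta>_def)
      finally have Nxz: "N (x - z) \<le> \<epsilon> * \<rho>" .
      have "\<rho> \<le> dist_set N z G + N (x - z)" unfolding \<rho>_def by (rule ds_lip[OF nN fG neG])
      moreover have "\<epsilon> * \<rho> \<le> (1/3) * \<rho>" using e1 rho by (intro mult_right_mono) auto
      ultimately have dz: "\<rho> / 3 \<le> dist_set N z G" using Nxz rho by linarith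
      have "\<rho> powr r * 3 powr (- r) = (\<rho> / 3) powr r" by (simp add: powr_divide powr_minus_divide)
      also have "\<dots> \<le> dist_set N z G powr r" using dz rho r by (intro powr_mono2) auto
      finally have A1: "\<rho> powr r * 3 powr (- r) \<le> dist_set N z G powr r" .
      have "t powr r \<le> (\<epsilon> * \<rho>) powr r" using t0 tle e0 rho r by (intro powr_mono2) auto
      also have "\<dots> = \<epsilon> powr r * \<rho> powr r" using e0 rho by (simp add: powr_mult)
      finally show "Gc + t powr r \<le> dist_set N z G powr r" using A1 by (simp add: Gc_def algebra_simps)
    qed
    have hz2: "\<forall>z\<in>nball N y t \<inter> A - {a 1}. M * h x \<le> h z"
    proof
      fix z assume z: "z \<in> nball N y t \<inter> A - {a 1}"
      have Nzy: "N (z - y) \<le> t" using z by (simp add: nball_def)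
      have N0zy: "N0 (z - y) \<le> C0 * t"
      proof -
        have "N0 (z - y) / C0 \<le> N (z - y)" using equiv by blast
        then have "N0 (z - y) \<le> C0 * N (z - y)" using C0 by (simp add: field_simps)
        also have "\<dots> \<le> C0 * t" using Nzy C0 by simp
        finally show ?thesis .
      qed
      have "L \<le> C0 * N0 (x - a 1)" using equiv by (simp add: L_def)
      have C0t: "C0 * t = \<delta> / C0" using C0 by (simp add: t_def \<delta>_def power2_eq_square field_simps)
      have "\<delta> / C0 = (1 - s) * L / C0" using Lpos by (simp add: s_def field_simps)
      also have "\<dots> = (1 - s) * (L / C0)" by simp
      also have "\<dots> \<le> (1 - s) * N0 (x - a 1)"
      proof (rule mult_left_mono)
        show "L / C0 \<le> N0 (x - a 1)" using \<open>L \<le> C0 * N0 (x - a 1)\<close> C0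
          by (simp add: divide_le_eq mult.commute)
      qed (use s1 in simp)
      finally have C0t': "C0 * t \<le> (1 - s) * N0 (x - a 1)" using C0t by simp
      have "N0 (z - a 1) \<le> N0 (z - y) + N0 (y - a 1)" by (rule isn_tri_diff[OF N0_norm])
      also have "\<dots> \<le> N0 (x - a 1)" using N0zy C0t' N0y by (simp add: algebra_simps)
      finally have "N0 (z - a 1) \<le> N0 (x - a 1)" .
      then show "M * h x \<le> h z"
        using radial z xA xa unfolding almost_radial_noninc_with_def by auto
    qed
    have Mh: "0 \<le> M * h x" using M_pos h_nonneg by simp
    have "Gc * (M * h x * pk * (t ^ DIM('a) * V)) \<le> Gc * measure P (nball N y t)"
      using P_ball_lower[OF yA t0 ty hz2 Mh] Gc0 by (intro mult_left_mono) auto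
    also have "\<dots> \<le> E G - E (insert y G)" by (rule E_diff_lower[OF fG neG Gc0 hz1])
    also have "\<dots> \<le> E G - E (a ` {1..Suc n})" using greedy'[of y] by simp
    finally have main: "Gc * (M * h x * pk * (t ^ DIM('a) * V)) \<le> E G - E (a ` {1..Suc n})" .
    have "Gc * (M * h x * pk * (t ^ DIM('a) * V)) = V * pk * phi_r r DIM('a) \<epsilon> * M / (2 * C0\<^sup>2) ^ DIM('a)
           * \<rho> powr (real DIM('a) + r) * h x"
    proof -
      have "t ^ DIM('a) = \<epsilon> ^ DIM('a) * \<rho> ^ DIM('a) / (2 * C0\<^sup>2) ^ DIM('a)"
        by (simp add: t_def power_divide power_mult_distrib)
      moreover have "\<rho> powr (real DIM('a) + r) = \<rho> ^ DIM('a) * \<rho> powr r"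
        using rho by (simp add: powr_add powr_realpow)
      ultimately show ?thesis by (simp add: Gc_def phi_r_def)
    qed
    then show ?thesis using main by (simp add: G_def \<rho>_def)
  qed
qed

end


context gq begin

lemma AE_supp: "AE x in lborel. 0 < h x \<longrightarrow> x \<in> A"
proof -
  define F where "F = {ball x e | x e. 0 < e \<and> emeasure P (ball x e) = 0}"
  have openF: "\<And>S. S \<in> F \<Longrightarrow> open S" unfolding F_def by auto
  obtain F' where F': "F' \<subseteq> F" "countable F'" "\<Union>F' = \<Union>F" using Lindelof[OF openF] by blast
  have nullF: "S \<in> null_sets P" if "S \<in> F" for S
    using that unfolding F_def by (auto simp: null_sets_def sets_P)
  have "(\<Union>S\<in>F'. S) \<in> null_sets P" using F' nullF by (intro null_sets_UN') auto
  then have nU: "\<Union>F \<in> null_sets P" using F' by simp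
  have "AE x in P. x \<in> msupp P"
  proof (rule AE_I'[OF nU])
    show "{x \<in> space P. x \<notin> msupp P} \<subseteq> \<Union>F"
    proof
      fix x assume "x \<in> {x \<in> space P. x \<notin> msupp P}"
      then obtain e where e: "e > 0" "\<not> emeasure P (ball x e) > 0" by (auto simp: msupp_def)
      then have "emeasure P (ball x e) = 0" by (simp add: zero_less_iff_neq_zero)
      then have "ball x e \<in> F" using e unfolding F_def by blast
      then show "x \<in> \<Union>F" using e(1) by (meson UnionI centre_in_ball)
    qed
  qed
  then have "AE x in P. x \<in> A" using supp by auto
  then have "AE x in lborel. 0 < ennreal (h x) \<longrightarrow> x \<in> A"
    unfolding P_def using h_meas by (subst (asm) AE_density) auto
  then show ?thesis by (auto elim!: AE_mp intro!: AE_I2)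
qed

lemma pw_bound:
  fixes \<rho> H K d :: real
  assumes "0 \<le> \<rho>" "0 \<le> H" "0 \<le> K" "\<rho> powr (d + r) * H \<le> K" "0 < d"
  shows "\<rho> powr r * H \<le> K powr (r / (d + r)) * H powr (d / (d + r))"
proof (cases "\<rho> = 0 \<or> H = 0")
  case True then show ?thesis using assms r by auto
next
  case False
  then have rp: "0 < \<rho>" and hp: "0 < H" using assms by auto
  have dr: "0 < d + r" using assms r by simp
  have "(\<rho> powr (d + r) * H) powr (r / (d + r)) = \<rho> powr r * H powr (r / (d + r))"
  proof -
    have q: "(d + r) * (r / (d + r)) = r" using dr by simp
    have "(\<rho> powr (d + r) * H) powr (r / (d + r)) = (\<rho> powr (d + r)) powr (r / (d + r)) * H powr (r / (d + r))"
      using rp hp by (simp add: powr_mult)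
    also have "(\<rho> powr (d + r)) powr (r / (d + r)) = \<rho> powr r" by (simp only: powr_powr q)
    finally show ?thesis .
  qed
  moreover have "H powr (r / (d + r)) * H powr (d / (d + r)) = H"
  proof -
    have "H powr (r / (d + r)) * H powr (d / (d + r)) = H powr (r / (d + r) + d / (d + r))"
      by (rule powr_add[symmetric])
    also have "r / (d + r) + d / (d + r) = 1" using dr by (simp add: add_divide_distrib[symmetric])
    finally show ?thesis using hp by simp
  qed
  moreover have "(\<rho> powr (d + r) * H) powr (r / (d + r)) \<le> K powr (r / (d + r))"
    using assms rp hp dr r by (intro powr_mono2) auto
  ultimately have "\<rho> powr r * H = (\<rho> powr (d + r) * H) powr (r / (d + r)) * H powr (d / (d + r))"
    by (simp add: mult.assoc)
  also have "\<dots> \<le> K powr (r / (d + r)) * H powr (d / (d + r))"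
    using \<open>(\<rho> powr (d + r) * H) powr (r / (d + r)) \<le> K powr (r / (d + r))\<close>
    by (intro mult_right_mono) auto
  finally show ?thesis .
qed

lemma phi_pos: assumes "0 < \<epsilon>" "\<epsilon> < 1/3" shows "0 < phi_r r DIM('a) \<epsilon>"
proof -
  have "\<epsilon> powr r < (1/3) powr r" using assms r by (intro powr_less_mono2) auto
  also have "\<dots> = 3 powr (- r)" by (simp add: powr_minus_divide powr_divide)
  finally show ?thesis using assms by (simp add: phi_r_def)
qed

lemma c0_pos: assumes "0 < \<epsilon>" "\<epsilon> < 1/3"
  shows "0 < V * pk * phi_r r DIM('a) \<epsilon> * M / (2 * C0\<^sup>2) ^ DIM('a)"
  using nball_vol_pos[OF nN] peakless phi_pos[OF assms] M_pos C0 by simp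

lemma E_bound:
  assumes n: "n \<ge> 1" and e0: "0 < \<epsilon>" and e1: "\<epsilon> < 1/3"
  shows "E (a ` {1..n}) \<le> ((E (a ` {1..n}) - E (a ` {1..Suc n})) /
            (V * pk * phi_r r DIM('a) \<epsilon> * M / (2 * C0\<^sup>2) ^ DIM('a))) powr (r / (real DIM('a) + r))
          * (\<integral>x. h x powr (real DIM('a) / (real DIM('a) + r)) \<partial>lborel)"
proof -
  define c0 where "c0 = V * pk * phi_r r DIM('a) \<epsilon> * M / (2 * C0\<^sup>2) ^ DIM('a)"
  define G where "G = a ` {1..n}"
  define D where "D = E G - E (a ` {1..Suc n})"
  define K where "K = D / c0"
  define q where "q = r / (real DIM('a) + r)"
  define p where "p = real DIM('a) / (real DIM('a) + r)"
  have fG: "finite G" and neG: "G \<noteq> {}" and a1G: "a 1 \<in> G" using n by (auto simp: G_def)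
  have c0: "0 < c0" unfolding c0_def by (rule c0_pos[OF e0 e1])
  have "insert (a 1) G = G" using a1G by auto
  then have D0: "0 \<le> D" using greedy_E[OF n, of "a 1"] by (simp add: D_def G_def)
  have K0: "0 \<le> K" using D0 c0 by (simp add: K_def)
  have ptA: "dist_set N x G powr (real DIM('a) + r) * h x \<le> K" if "x \<in> A" for x
  proof -
    have "c0 * (dist_set N x G powr (real DIM('a) + r) * h x) \<le> D"
      using gain[OF n that e0 e1] by (simp add: c0_def D_def G_def mult.assoc)
    then show ?thesis using c0 by (simp add: K_def field_simps)
  qed
  have dsb: "(\<lambda>x. dist_set N x G powr r) \<in> borel_measurable lborel"
  proof -
    have "(\<lambda>x. dist_set N x G) \<in> borel_measurable borel" by (rule ds_borel[OF nN fG neG])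
    then have "(\<lambda>x. dist_set N x G) \<in> borel_measurable lborel" by simp
    then show ?thesis by measurable
  qed
  have hge: "AE x in lborel. 0 \<le> h x" using h_nonneg by simp
  have "E G = (\<integral>x. h x *\<^sub>R dist_set N x G powr r \<partial>lborel)"
    unfolding E_def unfolding P_def using dsb h_meas hge
    by (subst integral_density) auto
  also have "\<dots> \<le> (\<integral>x. K powr q * h x powr p \<partial>lborel)"
  proof (rule integral_mono_AE)
    have "integrable P (\<lambda>x. dist_set N x G powr r)" by (rule int_ds[OF fG neG])
    then show "integrable lborel (\<lambda>x. h x *\<^sub>R dist_set N x G powr r)"
      unfolding P_def using dsb h_meas hge by (subst (asm) integrable_density) auto
    show "integrable lborel (\<lambda>x. K powr q * h x powr p)"
      using h_Lp unfolding p_def by (intro integrable_mult_right)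
    show "AE x in lborel. h x *\<^sub>R dist_set N x G powr r \<le> K powr q * h x powr p"
      using AE_supp
    proof (rule AE_mp, intro AE_I2 impI)
      fix x assume x: "0 < h x \<longrightarrow> x \<in> A"
      show "h x *\<^sub>R dist_set N x G powr r \<le> K powr q * h x powr p"
      proof (cases "h x = 0")
        case True then show ?thesis by simp
      next
        case False
        then have "x \<in> A" using x h_nonneg by (metis less_eq_real_def)
        then have "dist_set N x G powr r * h x \<le> K powr q * h x powr p"
          unfolding q_def p_def
          by (intro pw_bound[OF ds_nonneg[OF nN fG neG] _ K0 ptA]) (use h_nonneg in auto)
        then show ?thesis by (simp add: mult.commute)
      qed
    qed
  qed
  also have "\<dots> = K powr q * (\<integral>x. h x powr p \<partial>lborel)" by simp
  finally show ?thesis unfolding K_def D_def G_def q_def p_def c0_def by simp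
qed

end


lemma alg_eq:
  fixes V pk \<phi> M S C0 r m :: real and D :: nat
  assumes pos: "0 < V" "0 < pk" "0 < \<phi>" "0 < M" "0 < S" "0 < C0" "0 < r" "0 < m" "0 < D"
  shows "((real D / r) * (V * pk * \<phi> * M / (2 * C0\<^sup>2) ^ D / S powr ((real D + r) / r)) * m) powr (- 1 / real D)
    = (2 * C0\<^sup>2 * r powr (1 / real D) / (real D powr (1 / real D) * M powr (1 / real D) * V powr (1 / real D) * pk powr (1 / real D)))
      * \<phi> powr (- 1 / real D) * (S powr ((real D + r) / real D)) powr (1 / r) * m powr (- 1 / real D)"
    (is "?L = ?R")
proof -
  have Lp: "0 < ?L" and Rp: "0 < ?R" using pos by auto
  have "ln ?L = ln ?R"
    using pos by (simp add: ln_mult ln_div ln_powr ln_realpow field_simps)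
  then show ?thesis using ln_inj_iff[OF Lp Rp] by blast
qed



context gq begin

lemma D_nonneg: "n \<ge> 1 \<Longrightarrow> E (a ` {1..Suc n}) \<le> E (a ` {1..n})"
proof -
  assume n: "n \<ge> 1"
  have "insert (a 1) (a ` {1..n}) = a ` {1..n}" using n by auto
  then show ?thesis using greedy_E[OF n, of "a 1"] by simp
qed

lemma main_eps:
  assumes n: "n \<ge> 2" and e0: "0 < \<epsilon>" and e1: "\<epsilon> < 1/3"
    and S: "0 < (\<integral>x. h x powr (real DIM('a) / (real DIM('a) + r)) \<partial>lborel)"
  shows "E (a ` {1..n}) powr (1 / r) \<le>
    (2 * C0\<^sup>2 * r powr (1 / real DIM('a)) / (real DIM('a) powr (1 / real DIM('a)) * M powr (1 / real DIM('a))
        * V powr (1 / real DIM('a)) * pk powr (1 / real DIM('a))))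
      * phi_r r DIM('a) \<epsilon> powr (- 1 / real DIM('a))
      * ((\<integral>x. h x powr (real DIM('a) / (real DIM('a) + r)) \<partial>lborel) powr ((real DIM('a) + r) / real DIM('a))) powr (1 / r)
      * (real n - 1) powr (- 1 / real DIM('a))"
proof -
  define d where "d = real DIM('a)"
  define S where "S = (\<integral>x. h x powr (real DIM('a) / (real DIM('a) + r)) \<partial>lborel)"
  define \<phi> where "\<phi> = phi_r r DIM('a) \<epsilon>"
  define c0 where "c0 = V * pk * \<phi> * M / (2 * C0\<^sup>2) ^ DIM('a)"
  define c where "c = c0 / S powr ((d + r) / r)"
  define \<alpha> where "\<alpha> = d / r"
  define u where "u m = E (a ` {1..m})" for m
  have d0: "0 < d" by (simp add: d_def)
  have Sp: "0 < S" using S by (simp add: S_def)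
  have c0p: "0 < c0" unfolding c0_def \<phi>_def by (rule c0_pos[OF e0 e1])
  have cp: "0 < c" using c0p Sp by (simp add: c_def)
  have ap: "0 < \<alpha>" using d0 r by (simp add: \<alpha>_def)
  have u0: "\<forall>m\<ge>1. 0 \<le> u m" by (simp add: u_def E_nonneg)
  have a1: "1 + \<alpha> = (d + r) / r" using r by (simp add: \<alpha>_def field_simps)
  have step: "\<forall>m\<ge>1. u (Suc m) \<le> u m - c * u m powr (1 + \<alpha>)"
  proof (intro allI impI)
    fix m :: nat assume m: "m \<ge> 1"
    define X where "X = (u m - u (Suc m)) / c0"
    have X0: "0 \<le> X" using D_nonneg[OF m] c0p by (simp add: X_def u_def)
    have "u m \<le> X powr (r / (d + r)) * S"
      using E_bound[OF m e0 e1] by (simp add: X_def u_def d_def S_def c0_def \<phi>_def)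
    then have "u m / S \<le> X powr (r / (d + r))" using Sp by (simp add: field_simps)
    then have "(u m / S) powr ((d + r) / r) \<le> (X powr (r / (d + r))) powr ((d + r) / r)"
      using u0 m Sp d0 r by (intro powr_mono2) auto
    also have "\<dots> = X" using X0 d0 r by (simp add: powr_powr)
    finally have "u m powr ((d + r) / r) / S powr ((d + r) / r) \<le> X"
      using u0 m Sp by (simp add: powr_divide)
    then have "c * u m powr (1 + \<alpha>) \<le> u m - u (Suc m)"
      using c0p Sp unfolding a1 c_def X_def by (simp add: field_simps)
    then show "u (Suc m) \<le> u m - c * u m powr (1 + \<alpha>)" by simp
  qed
  have ub: "u n \<le> (\<alpha> * c * (real n - 1)) powr (- 1 / \<alpha>)" by (rule rec_bound[OF cp ap u0 step n])
  have mp: "0 < real n - 1" using n by simp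
  have "u n powr (1 / r) \<le> ((\<alpha> * c * (real n - 1)) powr (- 1 / \<alpha>)) powr (1 / r)"
    using ub u0 n r by (intro powr_mono2) auto
  also have "\<dots> = (\<alpha> * c * (real n - 1)) powr (- 1 / d)"
    using r d0 by (simp add: powr_powr \<alpha>_def)
  also have "\<dots> = (2 * C0\<^sup>2 * r powr (1 / d) / (d powr (1 / d) * M powr (1 / d) * V powr (1 / d) * pk powr (1 / d)))
      * \<phi> powr (- 1 / d) * (S powr ((d + r) / d)) powr (1 / r) * (real n - 1) powr (- 1 / d)"
    unfolding d_def \<alpha>_def c_def c0_def
    by (rule alg_eq) (use nball_vol_pos[OF nN] peakless phi_pos[OF e0 e1] M_pos Sp C0 r mp in
        \<open>auto simp: \<phi>_def d_def\<close>)
  finally show ?thesis by (simp add: u_def d_def S_def \<phi>_def)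
qed

end


context gq begin

lemma main_all:
  assumes n: "n \<ge> 2"
  shows "quant_err N r P (a ` {1..n})
     \<le> (2 * C0\<^sup>2 * r powr (1 / real DIM('a))
          / (real DIM('a) powr (1 / real DIM('a)) * M powr (real DIM('a) + r)
             * measure lborel (nball N 0 1) powr (1 / real DIM('a))
             * peakless_const N A (a 1) powr (1 / real DIM('a)))
        * (INF \<epsilon>\<in>{0<..<1/3}. phi_r r DIM('a) \<epsilon> powr (- 1 / real DIM('a))))
       * ((\<integral>x. h x powr (real DIM('a) / (real DIM('a) + r)) \<partial>lborel)
            powr ((real DIM('a) + r) / real DIM('a))) powr (1 / r)
       * (real n - 1) powr (- 1 / real DIM('a))"
proof -
  define d where "d = real DIM('a)"
  define S where "S = (\<integral>x. h x powr (real DIM('a) / (real DIM('a) + r)) \<partial>lborel)"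
  define K0 where "K0 = 2 * C0\<^sup>2 * r powr (1 / d) / (d powr (1 / d) * M powr (d + r) * V powr (1 / d) * pk powr (1 / d))"
  define K1 where "K1 = 2 * C0\<^sup>2 * r powr (1 / d) / (d powr (1 / d) * M powr (1 / d) * V powr (1 / d) * pk powr (1 / d))"
  define I where "I = (INF \<epsilon>\<in>{0<..<1/3}. phi_r r DIM('a) \<epsilon> powr (- 1 / d))"
  define T where "T = (S powr ((d + r) / d)) powr (1 / r) * (real n - 1) powr (- 1 / d)"
  have d0: "0 < d" by (simp add: d_def)
  have Vp: "0 < V" by (rule nball_vol_pos[OF nN])
  have S0: "0 \<le> S" unfolding S_def by (rule integral_nonneg_AE) simp
  have K0p: "0 < K0" using C0 r d0 M_pos Vp peakless by (simp add: K0_def)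
  have I0: "0 \<le> I" unfolding I_def by (rule cINF_greatest) auto
  have T0: "0 \<le> T" by (simp add: T_def)
  have ne: "{0<..<(1::real)/3} \<noteq> {}" by (simp add: greaterThanLessThan_empty_iff)
  have goal: "E (a ` {1..n}) powr (1 / r) \<le> K0 * I * T"
  proof (cases "S = 0")
    case True
    have "E (a ` {1..n}) \<le> 0" using E_bound[of n "1/6"] n True by (simp add: S_def)
    then have "E (a ` {1..n}) = 0" using E_nonneg[of "a ` {1..n}"] by simp
    then show ?thesis using K0p I0 T0 by simp
  next
    case False
    then have Sp: "0 < S" using S0 by simp
    have K1K0: "K1 \<le> K0"
    proof -
      have "M powr (d + r) \<le> M powr (1 / d)"
      proof (rule powr_mono')
        have "1 / d \<le> 1" using d0 by (simp add: d_def)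
        moreover have "1 \<le> d" by (simp add: d_def)
        ultimately show "1 / d \<le> d + r" using r by linarith
      qed (use M_pos M_le1 in auto)
      then have den: "d powr (1 / d) * M powr (d + r) * V powr (1 / d) * pk powr (1 / d)
          \<le> d powr (1 / d) * M powr (1 / d) * V powr (1 / d) * pk powr (1 / d)"
        by (intro mult_right_mono mult_left_mono) auto
      have pos: "0 < (d powr (1 / d) * M powr (1 / d) * V powr (1 / d) * pk powr (1 / d))
          * (d powr (1 / d) * M powr (d + r) * V powr (1 / d) * pk powr (1 / d))"
        using d0 M_pos Vp peakless by simp
      show ?thesis unfolding K0_def K1_def
        by (rule divide_left_mono[OF den _ pos]) (use C0 in simp)
    qed
    have Tp: "0 < T" using Sp n by (simp add: T_def)
    have each: "E (a ` {1..n}) powr (1 / r) / (K0 * T) \<le> phi_r r DIM('a) \<epsilon> powr (- 1 / d)"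
      if e: "\<epsilon> \<in> {0<..<1/3}" for \<epsilon>
    proof -
      have "E (a ` {1..n}) powr (1 / r) \<le> K1 * phi_r r DIM('a) \<epsilon> powr (- 1 / d) * T"
        using main_eps[OF n _ _ Sp[unfolded S_def], of \<epsilon>] e
        by (simp add: K1_def T_def d_def S_def mult.assoc)
      also have "\<dots> \<le> K0 * phi_r r DIM('a) \<epsilon> powr (- 1 / d) * T"
        using K1K0 T0 by (intro mult_right_mono) auto
      finally show ?thesis using K0p Tp by (simp add: field_simps)
    qed
    have "E (a ` {1..n}) powr (1 / r) / (K0 * T) \<le> I"
      unfolding I_def by (rule cINF_greatest[OF ne each])
    then show ?thesis using K0p Tp by (simp add: field_simps)
  qed
  then show ?thesis by (simp add: qe_E K0_def I_def T_def d_def S_def)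
qed

end

theorem theorem2p8:
  fixes N N0 :: "'a::euclidean_space \<Rightarrow> real"
    and h :: "'a \<Rightarrow> real" and a :: "nat \<Rightarrow> 'a" and A :: "'a set"
    and r M C0 :: real
  assumes r: "0 < r"
    and N: "is_norm N"
    and h_meas: "h \<in> borel_measurable lborel" and h_nonneg: "\<forall>x. 0 \<le> h x"
    and P_prob: "prob_space (density lborel (\<lambda>x. ennreal (h x)))"
    and h_Lp: "integrable lborel (\<lambda>x. h x powr (real DIM('a) / (real DIM('a) + r)))"
    and moment: "integrable (density lborel (\<lambda>x. ennreal (h x))) (\<lambda>x. N x powr r)"
    and greedy: "greedy_seq N r (density lborel (\<lambda>x. ennreal (h x))) a"
    and A_meas: "A \<in> sets lebesgue"
    and supp: "msupp (density lborel (\<lambda>x. ennreal (h x))) \<subseteq> A"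
    and a1A: "a 1 \<in> A"
    and star: "\<forall>x\<in>A. closed_segment (a 1) x \<subseteq> A"
    and peakless: "peakless_const N A (a 1) > 0"
    and radial: "almost_radial_noninc_with N0 M h A (a 1)"
    and C0: "1 \<le> C0"
    and equiv: "\<forall>x. N0 x / C0 \<le> N x \<and> N x \<le> C0 * N0 x"
  shows "\<forall>n\<ge>2. quant_err N r (density lborel (\<lambda>x. ennreal (h x))) (a ` {1..n})
     \<le> (2 * C0\<^sup>2 * r powr (1 / real DIM('a))
          / (real DIM('a) powr (1 / real DIM('a)) * M powr (real DIM('a) + r)
             * measure lborel (nball N 0 1) powr (1 / real DIM('a))
             * peakless_const N A (a 1) powr (1 / real DIM('a)))
        * (INF \<epsilon>\<in>{0<..<1/3}. phi_r r DIM('a) \<epsilon> powr (- 1 / real DIM('a))))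
       * ((\<integral>x. h x powr (real DIM('a) / (real DIM('a) + r)) \<partial>lborel)
            powr ((real DIM('a) + r) / real DIM('a))) powr (1 / r)
       * (real n - 1) powr (- 1 / real DIM('a))"
proof -
  interpret gq N N0 h a A r M C0 "density lborel (\<lambda>x. ennreal (h x))"
    by (rule gq.intro) (rule refl | fact)+
  show ?thesis using main_all by blast
qed


end
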